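(* Let $H$, $L$ be as in the context. For every feasible solution $(S,\mathcal T_0)$, $\omega_{LB}:=\lceil\omega(H)/L\rceil\le\omega(H_{\mathcal T_0})$.
   Context: Notation: $[n)=\{0,1,\dots,n-1\}$. Let $M,N,Z$ be positive integers and let $H$ be a binary $MZ\times NZ$ matrix made of $M\times N$ blocks, each a $Z\times Z$ circulant; assume $H$ has no zero row and no two identical rows. For $\mathcal A\subseteq[MZ)$, $H_{\mathcal A}$ is the submatrix of rows indexed by $\mathcal A$; $\omega(A)$ is the maximum Hamming weight of a column of $A$. For $i\in[MZ)$ and integer $s$, $\pi^s(i)=Z\lfloor i/Z\rfloor+((i+s)\bmod Z)$ and $\pi^s(\mathcal T)=\{\pi^s(x):x\in\mathcal T\}$. Fix an integer $L>1$. A pair $(S,\mathcal T_0)$ ($S$ a positive integer, $\mathcal T_0\subseteq[MZ)$) is a feasible solution if, with $\mathcal T_l=\pi^{lS}(\mathcal T_0)$ for $l\in[L)$, the sets $\mathcal T_0,\dots,\mathcal T_{L-1}$ are pairwise disjoint with union $[MZ)$. *)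

theory Defs
  imports Complex_Main
begin

text \<open>A matrix is represented as a function H :: nat => nat => nat, meaningful on
  row indices i < M*Z and column indices j < N*Z.\<close>

definition binary_matrix :: "nat \<Rightarrow> nat \<Rightarrow> (nat \<Rightarrow> nat \<Rightarrow> nat) \<Rightarrow> bool" where
  "binary_matrix R C H \<longleftrightarrow> (\<forall>i<R. \<forall>j<C. H i j \<in> {0, 1})"

definition block_circulant :: "nat \<Rightarrow> nat \<Rightarrow> nat \<Rightarrow> (nat \<Rightarrow> nat \<Rightarrow> nat) \<Rightarrow> bool" where
  "block_circulant M N Z H \<longleftrightarrow>
     (\<forall>b<M. \<forall>c<N. \<forall>r<Z. \<forall>k<Z.
        H (b*Z + (r+1) mod Z) (c*Z + (k+1) mod Z) = H (b*Z + r) (c*Z + k))"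

definition no_zero_row :: "nat \<Rightarrow> nat \<Rightarrow> (nat \<Rightarrow> nat \<Rightarrow> nat) \<Rightarrow> bool" where
  "no_zero_row R C H \<longleftrightarrow> (\<forall>i<R. \<exists>j<C. H i j \<noteq> 0)"

definition no_identical_rows :: "nat \<Rightarrow> nat \<Rightarrow> (nat \<Rightarrow> nat \<Rightarrow> nat) \<Rightarrow> bool" where
  "no_identical_rows R C H \<longleftrightarrow> (\<forall>i<R. \<forall>i'<R. i \<noteq> i' \<longrightarrow> (\<exists>j<C. H i j \<noteq> H i' j))"

definition omega :: "nat \<Rightarrow> (nat \<Rightarrow> nat \<Rightarrow> nat) \<Rightarrow> nat set \<Rightarrow> nat" where
  "omega C H A = Max ((\<lambda>j. card {i \<in> A. H i j \<noteq> 0}) ` {..<C})"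

definition pi_shift :: "nat \<Rightarrow> int \<Rightarrow> nat \<Rightarrow> nat" where
  "pi_shift Z s i = Z * (i div Z) + nat ((int i + s) mod int Z)"

definition feasible :: "nat \<Rightarrow> nat \<Rightarrow> nat \<Rightarrow> nat \<Rightarrow> nat set \<Rightarrow> bool" where
  "feasible M Z L S T0 \<longleftrightarrow> S > 0 \<and> T0 \<subseteq> {..<M*Z} \<and>
     (\<forall>l<L. \<forall>l'<L. l \<noteq> l' \<longrightarrow>
        pi_shift Z (int (l*S)) ` T0 \<inter> pi_shift Z (int (l'*S)) ` T0 = {}) \<and>
     (\<Union>l<L. pi_shift Z (int (l*S)) ` T0) = {..<M*Z}"

end

theory Submission
  imports Defs
begin

lemma circ_iter:
  assumes "block_circulant M N Z H" "b < M" "c < N" "r < Z" "k < Z" "Z > 0"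
  shows "H (b*Z + (r+t) mod Z) (c*Z + (k+t) mod Z) = H (b*Z + r) (c*Z + k)"
proof (induction t)
  case 0
  then show ?case using assms by simp
next
  case (Suc t)
  have "H (b*Z + ((r+t) mod Z + 1) mod Z) (c*Z + ((k+t) mod Z + 1) mod Z)
        = H (b*Z + (r+t) mod Z) (c*Z + (k+t) mod Z)"
    using assms(1,2,3,6) unfolding block_circulant_def by simp
  moreover have "((r+t) mod Z + 1) mod Z = (r + Suc t) mod Z"
    by (simp add: mod_Suc_eq)
  moreover have "((k+t) mod Z + 1) mod Z = (k + Suc t) mod Z"
    by (simp add: mod_Suc_eq)
  ultimately show ?case using Suc by simp
qed

lemma pi_nat: "Z > 0 \<Longrightarrow> pi_shift Z (int s) i = Z*(i div Z) + (i+s) mod Z"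
  unfolding pi_shift_def by (metis nat_int of_nat_add of_nat_mod)

lemma key:
  assumes "block_circulant M N Z H" "Z > 0" "i < M*Z" "j < N*Z"
  shows "H (pi_shift Z (int s) i) j = H i (Z*(j div Z) + (j mod Z + Z - s mod Z) mod Z)"
proof -
  define b where "b = i div Z"
  define r where "r = i mod Z"
  define c where "c = j div Z"
  define k where "k = j mod Z"
  define k' where "k' = (k + Z - s mod Z) mod Z"
  have b: "b < M" using assms(3) b_def by (simp add: less_mult_imp_div_less)
  have c: "c < N" using assms(4) c_def by (simp add: less_mult_imp_div_less)
  have r: "r < Z" using r_def assms(2) by simp
  have k': "k' < Z" using k'_def assms(2) by simp
  have i: "i = b*Z + r" using b_def r_def by simp
  have j: "j = c*Z + k" using c_def k_def by simp
  have pi: "pi_shift Z (int s) i = b*Z + (r+s) mod Z"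
    using pi_nat[OF assms(2)] i b_def
    by (metis mod_add_left_eq mod_mult_self3 mult.commute r_def)
  have kk: "(k'+s) mod Z = k"
  proof -
    have "k < Z" using k_def assms(2) by simp
    have "(k'+s) mod Z = (k + Z - s mod Z + s) mod Z" unfolding k'_def by (simp add: mod_add_left_eq)
    also have "\<dots> = (k + Z - s mod Z + s mod Z) mod Z" by (simp add: mod_add_right_eq)
    also have "\<dots> = (k + Z) mod Z"
      using mod_less_divisor[OF assms(2), of s] by simp
    also have "\<dots> = k" using \<open>k < Z\<close> by simp
    finally show ?thesis .
  qed
  have "H (b*Z + (r+s) mod Z) (c*Z + (k'+s) mod Z) = H (b*Z + r) (c*Z + k')"
    by (rule circ_iter[OF assms(1) b c r k' assms(2)])
  moreover have "H (pi_shift Z (int s) i) j = H (b*Z + (r+s) mod Z) (c*Z + (k'+s) mod Z)"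
    using pi kk j by simp
  moreover have "c*Z + k' = Z*(j div Z) + (j mod Z + Z - s mod Z) mod Z"
    unfolding c_def k'_def k_def by (simp add: mult.commute)
  ultimately show ?thesis using i by simp
qed

theorem theorem5:
  fixes M N Z L S :: nat and H :: "nat \<Rightarrow> nat \<Rightarrow> nat" and T0 :: "nat set"
  assumes "M > 0" "N > 0" "Z > 0" "L > 1"
    and "binary_matrix (M*Z) (N*Z) H"
    and "block_circulant M N Z H"
    and "no_zero_row (M*Z) (N*Z) H"
    and "no_identical_rows (M*Z) (N*Z) H"
    and "feasible M Z L S T0"
  shows "\<lceil>real (omega (N*Z) H {..<M*Z}) / real L\<rceil> \<le> int (omega (N*Z) H T0)"
proof -
  let ?w0 = "omega (N*Z) H T0"
  have T0: "T0 \<subseteq> {..<M*Z}" and cov: "(\<Union>l<L. pi_shift Z (int (l*S)) ` T0) = {..<M*Z}"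
    using assms(9) unfolding feasible_def by auto
  have fin0: "finite T0" using T0 finite_subset by blast
  have ne: "{..<N*Z} \<noteq> {}" using assms(2,3) by (simp add: lessThan_empty_iff)
  have "omega (N*Z) H {..<M*Z} \<in> (\<lambda>j. card {i \<in> {..<M*Z}. H i j \<noteq> 0}) ` {..<N*Z}"
    unfolding omega_def by (rule Max_in) (use ne in auto)
  then obtain j where j: "j < N*Z" and jw: "omega (N*Z) H {..<M*Z} = card {i \<in> {..<M*Z}. H i j \<noteq> 0}"
    by blast
  have each: "card {i \<in> pi_shift Z (int (l*S)) ` T0. H i j \<noteq> 0} \<le> ?w0" for l
  proof -
    let ?s = "l*S"
    let ?j' = "Z*(j div Z) + (j mod Z + Z - ?s mod Z) mod Z"
    have j': "?j' < N*Z"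
    proof -
      have "j div Z < N" using j by (simp add: less_mult_imp_div_less)
      hence "j div Z + 1 \<le> N" by simp
      hence "Z*(j div Z + 1) \<le> Z*N" by (rule mult_le_mono2)
      moreover have "(j mod Z + Z - ?s mod Z) mod Z < Z" using assms(3) by simp
      ultimately show ?thesis by (simp add: algebra_simps)
    qed
    have "{i \<in> pi_shift Z (int ?s) ` T0. H i j \<noteq> 0}
          = pi_shift Z (int ?s) ` {i \<in> T0. H (pi_shift Z (int ?s) i) j \<noteq> 0}" by auto
    also have "{i \<in> T0. H (pi_shift Z (int ?s) i) j \<noteq> 0} = {i \<in> T0. H i ?j' \<noteq> 0}"
      using key[OF assms(6) assms(3) _ j, where s="l*S"] T0 by auto
    finally have eq: "{i \<in> pi_shift Z (int ?s) ` T0. H i j \<noteq> 0}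
        = pi_shift Z (int ?s) ` {i \<in> T0. H i ?j' \<noteq> 0}" .
    have "card {i \<in> pi_shift Z (int ?s) ` T0. H i j \<noteq> 0}
        \<le> card {i \<in> T0. H i ?j' \<noteq> 0}"
      unfolding eq by (rule card_image_le) (use fin0 in simp)
    also have "\<dots> \<le> ?w0" unfolding omega_def
      using j' by (intro Max_ge) auto
    finally show ?thesis .
  qed
  have "(\<Union>l<L. {i \<in> pi_shift Z (int (l*S)) ` T0. H i j \<noteq> 0})
      = {i \<in> (\<Union>l<L. pi_shift Z (int (l*S)) ` T0). H i j \<noteq> 0}" by blast
  hence equ: "(\<Union>l<L. {i \<in> pi_shift Z (int (l*S)) ` T0. H i j \<noteq> 0}) = {i \<in> {..<M*Z}. H i j \<noteq> 0}"
    unfolding cov .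
  have "card {i \<in> {..<M*Z}. H i j \<noteq> 0} \<le> (\<Sum>l<L. card {i \<in> pi_shift Z (int (l*S)) ` T0. H i j \<noteq> 0})"
    unfolding equ[symmetric] by (rule card_UN_le) simp
  also have "\<dots> \<le> (\<Sum>l<L. ?w0)" by (intro sum_mono each)
  finally have w: "omega (N*Z) H {..<M*Z} \<le> L * ?w0" using jw by simp
  have "real (omega (N*Z) H {..<M*Z}) / real L \<le> real ?w0"
    using w assms(4) by (simp add: divide_le_eq mult.commute flip: of_nat_mult)
  thus ?thesis by (simp add: ceiling_le_iff)
qed

end
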